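(* Fix $t>0$. Let $P$ be a $t$-convex polygon in the Lorentz plane. Then $P$ is a proper convex subset of $\mathbb{R}^2$ contained in $\mathcal{F}$, bounded by a polygonal line with a countable number of sides, and globally invariant under the action of the group $\langle H_t\rangle$.
   Context: The Lorentz plane is $\mathbb{R}^2$ with the bilinear form $\langle x,y\rangle_1=x_1y_1-x_2y_2$. Let $\mathcal{F}=\{x\in\mathbb{R}^2 : \langle x,x\rangle_1<0,\ x_2>0\}$ (future time-like vectors) and $\mathbb{H}=\{x\in\mathbb{R}^2:\langle x,x\rangle_1=-1,\ x_2>0\}$. For $s\in\mathbb{R}$ let $H_s=\begin{pmatrix}\cosh s&\sinh s\\ \sinh s&\cosh s\end{pmatrix}$ (hyperbolic translation), and $\langle H_t\rangle$ the group generated by $H_t$. For $a\in\mathcal{F}$, $a^{\bot}=\{x\in\mathbb{R}^2:\langle x,a\rangle_1=\langle a,a\rangle_1\}$. A $t$-convex polygon is defined as follows: given $n\geq1$ pairwise distinct vectors $\eta_1,\dots,\eta_n\in\mathbb{H}$ and positive numbers $h_1,\dots,h_n$, it is the intersection, over all $k\in\mathbb{Z}$ and $i=1,\dots,n$, of the closed half-planes bounded by the lines $(H_t^k(h_i\eta_i))^{\bot}$, each half-plane chosen so that the vector $H_t^k\eta_i$ points into it (i.e. the half-plane $\{x:\langle x,H_t^k\eta_i\rangle_1\le -h_i\}$). *)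

theory Defs
  imports "HOL-Analysis.Analysis"
begin

text \<open>The Lorentz plane: vectors of real^2, with components x$1, x$2.\<close>

definition lor :: "real^2 \<Rightarrow> real^2 \<Rightarrow> real" where
  "lor x y = x$1 * y$1 - x$2 * y$2"

definition future_cone :: "(real^2) set" where
  "future_cone = {x. lor x x < 0 \<and> x$2 > 0}"

definition hyperbola :: "(real^2) set" where
  "hyperbola = {x. lor x x = -1 \<and> x$2 > 0}"

text \<open>Hyperbolic translation H_s.\<close>
definition Hmat :: "real \<Rightarrow> real^2^2" where
  "Hmat s = (\<chi> i j. if i = j then cosh s else sinh s)"

text \<open>Action of H_t^k (k an integer) on the plane.\<close>
definition Hpow :: "real \<Rightarrow> int \<Rightarrow> real^2 \<Rightarrow> real^2" where
  "Hpow t k = (if k \<ge> 0 then ((*v) (Hmat t)) ^^ nat k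
               else ((*v) (matrix_inv (Hmat t))) ^^ nat (- k))"

text \<open>Closed half-plane bounded by (H_t^k(h eta))^perp into which H_t^k eta points.\<close>
definition halfplane :: "real \<Rightarrow> int \<Rightarrow> real \<Rightarrow> real^2 \<Rightarrow> (real^2) set" where
  "halfplane t k h \<eta> = {x. lor x (Hpow t k \<eta>) \<le> - h}"

definition t_convex_polygon :: "real \<Rightarrow> (real^2) set \<Rightarrow> bool" where
  "t_convex_polygon t P \<longleftrightarrow>
     (\<exists>n::nat. \<exists>\<eta>::nat \<Rightarrow> real^2. \<exists>h::nat \<Rightarrow> real.
        n \<ge> 1 \<and> (\<forall>i<n. \<eta> i \<in> hyperbola) \<and> inj_on \<eta> {..<n} \<and> (\<forall>i<n. h i > 0) \<and>
        P = (\<Inter>k::int. \<Inter>i\<in>{..<n}. halfplane t k (h i) (\<eta> i)))"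

end

theory Submission
  imports Defs
begin

definition uu :: "real \<Rightarrow> real^2" where
  "uu a = (\<chi> i. if i = 1 then sinh a else cosh a)"

lemma uu1 [simp]: "uu a $ 1 = sinh a" and uu2 [simp]: "uu a $ 2 = cosh a"
  by (simp_all add: uu_def)

lemma vec2_eq: "(x::real^2) = y \<longleftrightarrow> x$1 = y$1 \<and> x$2 = y$2"
  by (simp add: vec_eq_iff forall_2)

lemma Hmat_mv1 [simp]: "(Hmat s *v x) $ 1 = cosh s * x$1 + sinh s * x$2"
  and Hmat_mv2 [simp]: "(Hmat s *v x) $ 2 = sinh s * x$1 + cosh s * x$2"
  by (simp_all add: Hmat_def matrix_vector_mult_def sum_2)

lemma Hmat_uu: "Hmat s *v uu a = uu (a + s)"
  by (simp add: vec2_eq sinh_add cosh_add algebra_simps)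

lemma Hmat_comp: "Hmat s *v (Hmat r *v x) = Hmat (s + r) *v x"
  by (simp add: vec2_eq sinh_add cosh_add algebra_simps)

lemma Hmat_0: "Hmat 0 *v x = x"
  by (simp add: vec2_eq)

lemma Hmat_mm: "Hmat s ** Hmat r = Hmat (s + r)"
proof -
  have "(Hmat s ** Hmat r) *v x = Hmat (s+r) *v x" for x
    by (simp add: matrix_vector_mul_assoc[symmetric] Hmat_comp)
  then show ?thesis by (metis matrix_eq)
qed

lemma Hmat_zero_mat: "Hmat 0 = mat 1"
  by (metis Hmat_0 matrix_eq matrix_vector_mul_lid)

lemma matrix_inv_Hmat: "matrix_inv (Hmat t) = Hmat (-t)"
proof -
  have ex: "\<exists>A'. Hmat t ** A' = mat 1 \<and> A' ** Hmat t = mat 1"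
    by (rule exI[of _ "Hmat (-t)"]) (simp add: Hmat_mm Hmat_zero_mat)
  have "Hmat t ** matrix_inv (Hmat t) = mat 1"
    unfolding matrix_inv_def using someI_ex[OF ex] by blast
  then have "Hmat (-t) ** (Hmat t ** matrix_inv (Hmat t)) = Hmat (-t)"
    by (simp add: matrix_mul_rid)
  then show ?thesis
    by (simp add: matrix_mul_assoc Hmat_mm Hmat_zero_mat matrix_mul_lid)
qed

lemma Hpow_eq: "Hpow t k x = Hmat (of_int k * t) *v x"
proof (cases "k \<ge> 0")
  case True
  have "(((*v) (Hmat t)) ^^ m) x = Hmat (real m * t) *v x" for m
    by (induction m) (simp_all add: Hmat_0 Hmat_comp algebra_simps)
  with True show ?thesis by (simp add: Hpow_def)
next
  case False
  have "(((*v) (Hmat (-t))) ^^ m) x = Hmat (- (real m * t)) *v x" for m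
    by (induction m) (simp_all add: Hmat_0 Hmat_comp algebra_simps)
  with False show ?thesis by (simp add: Hpow_def matrix_inv_Hmat)
qed

lemma lor_Hmat: "lor (Hmat s *v x) (Hmat s *v y) = lor x y"
proof -
  have e: "(cosh s)^2 - (sinh s)^2 = 1" by (simp add: cosh_square_eq)
  have "lor (Hmat s *v x) (Hmat s *v y) = ((cosh s)^2 - (sinh s)^2) * (x$1*y$1 - x$2*y$2)"
    unfolding lor_def by (simp add: algebra_simps power2_eq_square)
  then show ?thesis using e by (simp add: lor_def)
qed

lemma lor_uu: "lor (r *\<^sub>R uu a) (uu b) = - r * cosh (a - b)"
  by (simp add: lor_def cosh_diff algebra_simps)

lemma hyperbola_uu: "x \<in> hyperbola \<Longrightarrow> x = uu (arsinh (x$1))"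
proof -
  assume "x \<in> hyperbola"
  then have h: "x$1 * x$1 - x$2 * x$2 = -1" "x$2 > 0" by (auto simp: hyperbola_def lor_def)
  have c: "cosh (arsinh (x$1)) ^ 2 = x$1^2 + 1" by (simp add: cosh_square_eq)
  have "x$2 ^2 = x$1^2 + 1" using h by (simp add: power2_eq_square)
  then have "cosh (arsinh (x$1)) = x$2" using c h(2)
    by (metis cosh_real_pos less_eq_real_def power2_eq_iff_nonneg)
  then show ?thesis by (simp add: vec2_eq)
qed

lemma lor_lin: "lor (a *\<^sub>R x + b *\<^sub>R y) w = a * lor x w + b * lor y w"
  by (simp add: lor_def algebra_simps)

lemma lor_uu_exp: "lor x (uu p) = - ((x$2 - x$1) * exp p + (x$2 + x$1) * exp (-p)) / 2"
  by (simp add: lor_def sinh_def cosh_def algebra_simps exp_minus divide_simps)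

lemma unb_above_false:
  assumes "(hh::real) > 0" "\<forall>c. \<exists>p\<in>S. p > c" "\<forall>p\<in>S. b * exp (-p) \<ge> hh"
  shows False
proof -
  obtain p where p: "p \<in> S" "p > ln ((\<bar>b\<bar> + 1) / hh)" using assms(2) by blast
  have pos: "(\<bar>b\<bar> + 1) / hh > 0" using assms(1) by simp
  have "exp (ln ((\<bar>b\<bar> + 1) / hh)) < exp p" using p by simp
  then have "(\<bar>b\<bar> + 1) / hh < exp p" using pos by simp
  then have "\<bar>b\<bar> + 1 < hh * exp p" using assms(1) by (simp add: field_simps)
  then have 1: "(\<bar>b\<bar> + 1) * exp (-p) < hh" by (simp add: exp_minus field_simps)
  have 2: "b * exp (-p) \<le> \<bar>b\<bar> * exp (-p)" by (simp add: mult_right_mono)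
  have 3: "\<bar>b\<bar> * exp (-p) < (\<bar>b\<bar> + 1) * exp (-p)" by simp
  have "hh \<le> b * exp (-p)" using assms(3) p(1) by blast
  with 1 2 3 show False by linarith
qed

lemma unb_below_false:
  assumes "(hh::real) > 0" "\<forall>c. \<exists>p\<in>S. p < c" "\<forall>p\<in>S. a * exp p \<ge> hh"
  shows False
proof (rule unb_above_false[of hh "uminus ` S" a])
  show "hh > 0" by fact
  show "\<forall>c. \<exists>p\<in>uminus ` S. c < p"
  proof
    fix c obtain p where "p \<in> S" "p < -c" using assms(2) by blast
    then show "\<exists>p\<in>uminus ` S. c < p" by force
  qed
  show "\<forall>p\<in>uminus ` S. hh \<le> a * exp (- p)" using assms(3) by auto
qed

lemma cont_lor: "continuous_on UNIV (\<lambda>x. lor x w)"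
  unfolding lor_def by (intro continuous_intros)

lemma expg_two_zeros:
  fixes A B :: real
  assumes "A * exp x1 + B * exp (-x1) = 0" "A * exp x2 + B * exp (-x2) = 0" "x1 \<noteq> x2"
  shows "A = 0 \<and> B = 0"
proof -
  have e: "A * exp x * exp x + B = 0" if "A * exp x + B * exp (-x) = 0" for x
  proof -
    have "(A * exp x + B * exp (-x)) * exp x = 0" using that by simp
    then show ?thesis by (simp add: algebra_simps exp_minus)
  qed
  have 1: "A * (exp x1 * exp x1) + B = 0" using e[OF assms(1)] by (simp add: mult.assoc)
  have 2: "A * (exp x2 * exp x2) + B = 0" using e[OF assms(2)] by (simp add: mult.assoc)
  have "exp x1 * exp x1 \<noteq> exp x2 * exp x2"
    using assms(3) by (simp flip: exp_add)
  then have "A = 0" using 1 2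
    by (metis add_right_cancel mult_cancel_left)
  with 1 show ?thesis by simp
qed

lemma sign_const:
  fixes g :: "real \<Rightarrow> real"
  assumes cont: "\<And>x. isCont g x" and pq: "p < m" "m < q" and gm: "g m \<ge> 0"
    and nz: "\<And>z. p < z \<Longrightarrow> z < q \<Longrightarrow> g z \<noteq> 0"
    and x: "p \<le> x" "x \<le> q"
  shows "g x \<ge> 0"
proof (rule ccontr)
  assume neg: "\<not> g x \<ge> 0"
  have gm': "g m > 0" using gm nz[OF pq] by linarith
  show False
  proof (cases "x < m")
    case True
    obtain z where z: "x \<le> z" "z \<le> m" "g z = 0"
      using IVT[of g x 0 m] neg gm' True cont by fastforce
    have "z \<noteq> x" using z neg by auto
    then show False using nz[of z] z x pq by auto
  next
    case False
    then have "m < x" using neg gm' by (cases "m = x") auto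
    obtain z where z: "m \<le> z" "z \<le> x" "g z = 0"
      using IVT2[of g x 0 m] neg gm' \<open>m < x\<close> cont by fastforce
    have "z \<noteq> x" using z neg by auto
    then show False using nz[of z] z x pq by auto
  qed
qed

lemma subsingleton_finite: "(\<forall>x\<in>S. \<forall>y\<in>S. x = y) \<Longrightarrow> finite S"
  by (metis finite.emptyI finite_insert finite_subset insert_iff subsetI ex_in_conv)

lemma cosh_shift: "cosh ((x::real) - c) = (exp (-c) / 2) * exp x + (exp c / 2) * exp (-x)"
proof -
  have 1: "exp (x - c) = exp (-c) * exp x" by (simp flip: exp_add)
  have 2: "exp (-(x - c)) = exp c * exp (-x)" by (simp flip: exp_add)
  show ?thesis unfolding cosh_def 1 2 by (simp add: algebra_simps)
qed

lemma int_step: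
  fixes k N :: int assumes N: "N > 0"
  shows "(k+1) mod N = (if k mod N + 1 < N then k mod N + 1 else 0) \<and>
         (k+1) div N = (if k mod N + 1 < N then k div N else k div N + 1)"
proof -
  define l where "l = k mod N"
  define q where "q = k div N"
  have l: "0 \<le> l" "l < N" unfolding l_def using N by auto
  have k: "k + 1 = (l + 1) + q * N" unfolding l_def q_def
    using div_mult_mod_eq[of k N] by linarith
  show ?thesis
  proof (cases "l + 1 < N")
    case True
    have "(k + 1) mod N = (l + 1) mod N" unfolding k by (rule mod_mult_self1)
    also have "\<dots> = l + 1" using True l by simp
    finally have m: "(k + 1) mod N = l + 1" .
    have "(k + 1) div N = q + (l + 1) div N" unfolding k using N by (simp only: div_mult_self1)
    also have "\<dots> = q" using True l by simp
    finally show ?thesis using m True unfolding l_def q_def by simp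
  next
    case False
    then have lN: "l + 1 = N" using l by simp
    have k': "k + 1 = 0 + (q + 1) * N" using k lN by (simp add: algebra_simps)
    have "(k + 1) mod N = 0" unfolding k' by (simp only: mod_mult_self1) simp
    moreover have "(k + 1) div N = q + 1" unfolding k' using N by (simp only: div_mult_self1) simp
    ultimately show ?thesis using False unfolding l_def q_def by simp
  qed
qed
lemma cone_uu:
  assumes "a < b"
  shows "uu th = (sinh (b - th) / sinh (b - a)) *\<^sub>R uu a + (sinh (th - a) / sinh (b - a)) *\<^sub>R uu b"
proof -
  have sp: "sinh (b - a) \<noteq> 0" using assms by simp
  have 1: "sinh (b - th) * sinh a + sinh (th - a) * sinh b = sinh (b - a) * sinh th"
    unfolding sinh_diff by algebra
  have 2: "sinh (b - th) * cosh a + sinh (th - a) * cosh b = sinh (b - a) * cosh th"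
    unfolding sinh_diff by algebra
  define S where "S = sinh (b - a)"
  have e1: "sinh (b - th) / S * sinh a + sinh (th - a) / S * sinh b = sinh th"
  proof -
    have "sinh (b - th) / S * sinh a + sinh (th - a) / S * sinh b
        = (sinh (b - th) * sinh a + sinh (th - a) * sinh b) / S" by (simp add: add_divide_distrib)
    also have "\<dots> = sinh th" unfolding 1 S_def using sp by simp
    finally show ?thesis .
  qed
  have e2: "sinh (b - th) / S * cosh a + sinh (th - a) / S * cosh b = cosh th"
  proof -
    have "sinh (b - th) / S * cosh a + sinh (th - a) / S * cosh b
        = (sinh (b - th) * cosh a + sinh (th - a) * cosh b) / S" by (simp add: add_divide_distrib)
    also have "\<dots> = cosh th" unfolding 2 S_def using sp by simp
    finally show ?thesis .
  qed
  show ?thesis unfolding vec2_eq using e1 e2 unfolding S_def by simp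
qed

lemma uu_ne:
  assumes "ra > 0" "a \<noteq> b"
  shows "ra *\<^sub>R uu a \<noteq> rb *\<^sub>R uu b"
proof
  assume e: "ra *\<^sub>R uu a = rb *\<^sub>R uu b"
  have "(ra *\<^sub>R uu a)$1 = (rb *\<^sub>R uu b)$1" "(ra *\<^sub>R uu a)$2 = (rb *\<^sub>R uu b)$2"
    using e by simp_all
  then have e1: "ra * sinh a = rb * sinh b" and e2: "ra * cosh a = rb * cosh b" by simp_all
  have "ra * (rb * sinh (a - b)) = (ra * sinh a) * (rb * cosh b) - (ra * cosh a) * (rb * sinh b)"
    unfolding sinh_diff by algebra
  also have "\<dots> = 0" unfolding e1 e2 by simp
  finally have "rb * sinh (a - b) = 0" using assms(1) by simp
  moreover have "rb \<noteq> 0"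
  proof
    assume "rb = 0"
    then have "ra * cosh a = 0" using e2 by simp
    then show False using assms(1) by simp
  qed
  ultimately have "sinh (a - b) = 0" by simp
  then show False using assms(2) by simp
qed

locale tp =
  fixes t :: real and n :: nat and \<eta> :: "nat \<Rightarrow> real^2" and h :: "nat \<Rightarrow> real"
  assumes tpos: "t > 0" and npos: "n \<ge> 1" and hyp: "\<forall>i<n. \<eta> i \<in> hyperbola"
    and hpos: "\<forall>i<n. h i > 0"
begin

definition phi where "phi i = arsinh (\<eta> i $ 1)"
definition psi :: "int \<times> nat \<Rightarrow> real" where "psi j = phi (snd j) + of_int (fst j) * t"
definition F :: "int \<times> nat \<Rightarrow> real \<Rightarrow> real" where "F j th = h (snd j) / cosh (th - psi j)"
definition PP where "PP = {x. \<forall>k i. i < n \<longrightarrow> lor x (uu (psi (k,i))) \<le> - h i}"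
definition Hm where "Hm = Max (h ` {..<n})"

lemma Hm: "i < n \<Longrightarrow> h i \<le> Hm" unfolding Hm_def by simp

lemma Hm_pos: "Hm > 0"
proof -
  have "0 < n" using npos by simp
  then have "h 0 > 0" "h 0 \<le> Hm" using hpos Hm by auto
  then show ?thesis by linarith
qed

lemma eta_uu: "i < n \<Longrightarrow> \<eta> i = uu (phi i)"
proof -
  assume "i < n"
  then have "\<eta> i \<in> hyperbola" using hyp by auto
  from hyperbola_uu[OF this] show ?thesis unfolding phi_def .
qed

lemma Hpow_eta: "i < n \<Longrightarrow> Hpow t k (\<eta> i) = uu (psi (k,i))"
  by (simp add: Hpow_eq eta_uu Hmat_uu psi_def)

lemma P_eq: "(\<Inter>k::int. \<Inter>i\<in>{..<n}. halfplane t k (h i) (\<eta> i)) = PP"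
  unfolding PP_def halfplane_def by (auto simp: Hpow_eta)

lemma convex_PP: "convex PP"
  unfolding convex_def PP_def
proof (clarsimp)
  fix x y k i and u v :: real
  assume a: "\<forall>k i. i < n \<longrightarrow> lor x (uu (psi (k, i))) \<le> - h i"
     "\<forall>k i. i < n \<longrightarrow> lor y (uu (psi (k, i))) \<le> - h i" "0 \<le> u" "0 \<le> v" "u + v = 1" "i < n"
  have "u * lor x (uu (psi (k, i))) \<le> u * - h i" using a by (intro mult_left_mono) auto
  moreover have "v * lor y (uu (psi (k, i))) \<le> v * - h i" using a by (intro mult_left_mono) auto
  ultimately show "lor (u *\<^sub>R x + v *\<^sub>R y) (uu (psi (k, i))) \<le> - h i"
  proof -
    have "u * - h i + v * - h i = - ((u + v) * h i)" by (simp add: algebra_simps)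
    also have "\<dots> = - h i" using a(5) by simp
    finally have e: "u * - h i + v * - h i = - h i" .
    have "lor (u *\<^sub>R x + v *\<^sub>R y) (uu (psi (k, i))) = u * lor x (uu (psi (k, i))) + v * lor y (uu (psi (k, i)))"
      by (rule lor_lin)
    then show ?thesis using e \<open>u * lor x (uu (psi (k, i))) \<le> u * - h i\<close>
      \<open>v * lor y (uu (psi (k, i))) \<le> v * - h i\<close> by linarith
  qed
qed

lemma closed_PP: "closed PP"
proof -
  have eq: "PP = (\<Inter>k. \<Inter>i\<in>{..<n}. {x. lor x (uu (psi (k,i))) \<le> - h i})"
    unfolding PP_def by blast
  have c: "closed {x. lor x (uu (psi (k,i))) \<le> - h i}" for k i
    by (rule closed_Collect_le[OF cont_lor continuous_on_const])
  show ?thesis unfolding eq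
    by (intro closed_INT ballI c)
qed

lemma PP_nonempty: "Hm *\<^sub>R uu 0 \<in> PP"
  unfolding PP_def
proof (clarsimp simp: lor_uu)
  fix k i assume "i < n"
  then have "h i \<le> Hm" by (rule Hm)
  moreover have "Hm \<le> Hm * cosh (psi (k,i))"
    using Hm_pos cosh_real_ge_1 by (simp add: mult_le_cancel_left1 cosh_real_ge_1)
  ultimately show "h i \<le> Hm * cosh (psi (k, i))" by linarith
qed

lemma zero_notin: "0 \<notin> PP"
  using npos hpos unfolding PP_def lor_def by (auto intro!: exI[of _ 0])

lemma psi_unb: "\<forall>c. \<exists>p\<in>range (\<lambda>k. psi (k,i)). p > c" "\<forall>c. \<exists>p\<in>range (\<lambda>k. psi (k,i)). p < c"
proof -
  show "\<forall>c. \<exists>p\<in>range (\<lambda>k. psi (k,i)). p > c"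
  proof
    fix c
    define k where "k = \<lceil>(c - phi i) / t\<rceil> + 1"
    have "(c - phi i) / t < of_int k" unfolding k_def by linarith
    then have "c - phi i < of_int k * t" using tpos by (simp add: field_simps)
    then have "psi (k,i) > c" by (simp add: psi_def)
    then show "\<exists>p\<in>range (\<lambda>k. psi (k,i)). p > c" by blast
  qed
  show "\<forall>c. \<exists>p\<in>range (\<lambda>k. psi (k,i)). p < c"
  proof
    fix c
    define k where "k = \<lfloor>(c - phi i) / t\<rfloor> - 1"
    have "(c - phi i) / t > of_int k" unfolding k_def by linarith
    then have "c - phi i > of_int k * t" using tpos by (simp add: field_simps)
    then have "psi (k,i) < c" by (simp add: psi_def)
    then show "\<exists>p\<in>range (\<lambda>k. psi (k,i)). p < c" by blast
  qed
qed

lemma PP_sub: "PP \<subseteq> future_cone"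
proof
  fix x assume x: "x \<in> PP"
  define a where "a = x$2 - x$1"
  define b where "b = x$2 + x$1"
  have h0: "h 0 > 0" using hpos npos by auto
  have c: "a * exp p + b * exp (-p) \<ge> 2 * h 0" if pr: "p \<in> range (\<lambda>k. psi (k,0))" for p
  proof -
    obtain k where k: "p = psi (k,0)" using pr by blast
    have "lor x (uu (psi (k,0))) \<le> - h 0" using x npos unfolding PP_def by auto
    then show ?thesis unfolding k lor_uu_exp a_def b_def by simp
  qed
  have apos: "a > 0"
  proof (rule ccontr)
    assume "\<not> a > 0"
    have "\<forall>p\<in>range (\<lambda>k. psi (k,0)). b * exp (-p) \<ge> 2 * h 0"
    proof
      fix p assume p: "p \<in> range (\<lambda>k. psi (k,0))"
      have "a * exp p \<le> 0" using \<open>\<not> a > 0\<close> by (intro mult_nonpos_nonneg) auto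
      then show "b * exp (-p) \<ge> 2 * h 0" using c[OF p] by linarith
    qed
    then show False using unb_above_false[OF _ psi_unb(1), of "2 * h 0" 0 b] h0 by linarith
  qed
  have bpos: "b > 0"
  proof (rule ccontr)
    assume "\<not> b > 0"
    have "\<forall>p\<in>range (\<lambda>k. psi (k,0)). a * exp p \<ge> 2 * h 0"
    proof
      fix p assume p: "p \<in> range (\<lambda>k. psi (k,0))"
      have "b * exp (-p) \<le> 0" using \<open>\<not> b > 0\<close> by (intro mult_nonpos_nonneg) auto
      then show "a * exp p \<ge> 2 * h 0" using c[OF p] by linarith
    qed
    then show False using unb_below_false[OF _ psi_unb(2), of "2 * h 0" 0 a] h0 by linarith
  qed
  have "lor x x = - (a * b)" unfolding lor_def a_def b_def by (simp add: algebra_simps)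
  moreover have "x$2 > 0" using apos bpos a_def b_def by simp
  ultimately show "x \<in> future_cone" using apos bpos by (simp add: future_cone_def)
qed

lemma Hmat_PP: "x \<in> PP \<Longrightarrow> Hmat (of_int m * t) *v x \<in> PP"
proof -
  assume x: "x \<in> PP"
  have "lor (Hmat (of_int m * t) *v x) (uu (psi (k,i))) = lor x (uu (psi (k - m, i)))" for k i
  proof -
    have "uu (psi (k,i)) = Hmat (of_int m * t) *v uu (psi (k - m, i))"
      by (simp add: Hmat_uu psi_def algebra_simps)
    then show ?thesis by (simp add: lor_Hmat)
  qed
  then show ?thesis using x unfolding PP_def by auto
qed

lemma Hpow_PP: "Hpow t m ` PP = PP"
proof
  show "Hpow t m ` PP \<subseteq> PP" using Hmat_PP by (auto simp: Hpow_eq)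
  show "PP \<subseteq> Hpow t m ` PP"
  proof
    fix x assume "x \<in> PP"
    then have "Hmat (of_int (-m) * t) *v x \<in> PP" by (rule Hmat_PP)
    moreover have "x = Hpow t m (Hmat (of_int (-m) * t) *v x)"
      by (simp add: Hpow_eq Hmat_comp Hmat_0)
    ultimately show "x \<in> Hpow t m ` PP" by blast
  qed
qed

lemma lor_uu_uu: "lor (uu p) (uu p) = -1"
  by (simp add: lor_def cosh_square_eq power2_eq_square[symmetric])

lemma lor_minus_scale: "lor (y - s *\<^sub>R w) w = lor y w - s * lor w w"
  by (simp add: lor_def algebra_simps)

lemma polar: "x \<in> future_cone \<Longrightarrow> \<exists>r>0. \<exists>th. x = r *\<^sub>R uu th"
proof -
  assume "x \<in> future_cone"
  then have x: "x$1 * x$1 - x$2 * x$2 < 0" "x$2 > 0" by (auto simp: future_cone_def lor_def)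
  define r where "r = sqrt (x$2^2 - x$1^2)"
  have r2: "r^2 = x$2^2 - x$1^2" using x unfolding r_def by (simp add: power2_eq_square)
  have rpos: "r > 0" using x unfolding r_def by (simp add: power2_eq_square)
  define th where "th = arsinh (x$1 / r)"
  have s: "r * sinh th = x$1" using rpos by (simp add: th_def)
  have "(r * cosh th)^2 = r^2 * (1 + (x$1/r)^2)"
    by (simp add: th_def power_mult_distrib cosh_square_eq)
  also have "\<dots> = x$2^2" using rpos r2 by (simp add: field_simps)
  finally have sq: "(r * cosh th)^2 = x$2^2" .
  have "r * cosh th \<ge> 0" using rpos by simp
  then have "r * cosh th = x$2" using sq x(2) power2_eq_iff_nonneg[of "r * cosh th" "x$2"] by simp
  with s rpos show ?thesis by (intro exI[of _ r] conjI exI[of _ th]) (auto simp: vec2_eq)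
qed

lemma F_pos: "snd j < n \<Longrightarrow> F j th > 0"
  using hpos by (simp add: F_def)

lemma F_le_iff: "F j th \<le> r \<longleftrightarrow> lor (r *\<^sub>R uu th) (uu (psi j)) \<le> - h (snd j)"
proof -
  have c: "cosh (th - psi j) > 0" by simp
  have "F j th \<le> r \<longleftrightarrow> h (snd j) \<le> r * cosh (th - psi j)"
    unfolding F_def using c by (simp add: divide_le_eq)
  then show ?thesis unfolding lor_uu by linarith
qed

lemma in_PP_iff: "r *\<^sub>R uu th \<in> PP \<longleftrightarrow> (\<forall>k i. i < n \<longrightarrow> F (k,i) th \<le> r)"
  unfolding PP_def using F_le_iff by auto

lemma on_line_iff: "lor (r *\<^sub>R uu th) (uu (psi j)) = - h (snd j) \<longleftrightarrow> F j th = r"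
proof -
  have c: "cosh (th - psi j) > 0" by simp
  have "F j th = r \<longleftrightarrow> h (snd j) = r * cosh (th - psi j)"
    unfolding F_def using c by (auto simp: divide_eq_eq)
  then show ?thesis unfolding lor_uu by linarith
qed

lemma frontier_I:
  assumes y: "y \<in> PP" and i: "lor y (uu (psi (k,i))) = - h i" and iN: "i < n"
  shows "y \<in> frontier PP"
proof -
  define w where "w = uu (psi (k,i))"
  have wne: "norm w > 0"
  proof -
    have "w$2 \<noteq> 0" unfolding w_def using cosh_real_pos by (metis uu2 less_irrefl)
    then have "w \<noteq> 0" by auto
    then show ?thesis by simp
  qed
  have "y \<notin> interior PP"
  proof
    assume "y \<in> interior PP"
    then obtain e where e: "e > 0" "ball y e \<subseteq> PP" using mem_interior by blast
    define s where "s = e / (2 * norm w)"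
    have spos: "s > 0" using e wne by (simp add: s_def)
    have "dist y (y - s *\<^sub>R w) = s * norm w" using spos by (simp add: dist_norm)
    also have "\<dots> = e / 2" using wne by (simp add: s_def)
    finally have "y - s *\<^sub>R w \<in> PP" using e by auto
    then have "lor (y - s *\<^sub>R w) w \<le> - h i" using iN unfolding PP_def w_def by blast
    moreover have "lor (y - s *\<^sub>R w) w = - h i + s"
      using i by (simp add: lor_minus_scale w_def lor_uu_uu)
    ultimately show False using spos by simp
  qed
  moreover have "y \<in> closure PP" using y closure_subset by blast
  ultimately show ?thesis by (simp add: frontier_def)
qed

definition Phi where "Phi = Max ((\<lambda>i. \<bar>phi i\<bar>) ` {..<n})"

lemma Phi: "i < n \<Longrightarrow> \<bar>phi i\<bar> \<le> Phi" unfolding Phi_def by simp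

lemma finite_psi_bounded: "finite {(k,i). i < n \<and> \<bar>psi (k,i)\<bar> < M}"
proof -
  define K where "K = \<lceil>(\<bar>M\<bar> + Phi) / t\<rceil>"
  have "{(k,i). i < n \<and> \<bar>psi (k,i)\<bar> < M} \<subseteq> {-K..K} \<times> {..<n}"
  proof clarify
    fix k i assume a: "i < n" "\<bar>psi (k,i)\<bar> < M"
    have "\<bar>of_int k * t\<bar> \<le> \<bar>psi (k,i)\<bar> + \<bar>phi i\<bar>" by (simp add: psi_def)
    also have "\<dots> \<le> \<bar>M\<bar> + Phi" using a Phi[of i] by linarith
    finally have "\<bar>of_int k\<bar> * t \<le> \<bar>M\<bar> + Phi" using tpos by (simp add: abs_mult)
    then have "\<bar>of_int k\<bar> \<le> (\<bar>M\<bar> + Phi) / t" using tpos by (simp add: pos_le_divide_eq)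
    also have "\<dots> \<le> of_int K" unfolding K_def by (rule le_of_int_ceiling)
    finally have "of_int \<bar>k\<bar> \<le> (of_int K :: real)" by simp
    then have "\<bar>k\<bar> \<le> K" by (simp only: of_int_le_iff)
    then show "k \<in> {-K..K} \<and> i \<in> {..<n}" using a by auto
  qed
  then show ?thesis by (rule finite_subset) auto
qed

lemma cosh_gt_abs_half: "cosh (p::real) > \<bar>p\<bar> / 2"
proof -
  have "exp \<bar>p\<bar> \<ge> 1 + \<bar>p\<bar>" by (rule exp_ge_add_one_self)
  moreover have "cosh p = cosh \<bar>p\<bar>" by simp
  moreover have "cosh \<bar>p\<bar> \<ge> exp \<bar>p\<bar> / 2"
    by (simp add: cosh_def exp_minus)
  ultimately show ?thesis by linarith
qed

lemma interior_I:
  assumes x: "x \<in> PP" and strict: "\<forall>k i. i < n \<longrightarrow> lor x (uu (psi (k,i))) < - h i"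
  shows "x \<in> interior PP"
proof -
  have xF: "x \<in> future_cone" using x PP_sub by blast
  define a where "a = x$2 - x$1"
  define b where "b = x$2 + x$1"
  have xx: "x$1 * x$1 < x$2 * x$2" "x$2 > 0" using xF by (auto simp: future_cone_def lor_def)
  have "\<bar>x$1\<bar> < x$2"
    by (rule power2_less_imp_less) (use xx in \<open>simp_all add: power2_eq_square\<close>)
  then have apos: "a > 0" and bpos: "b > 0" unfolding a_def b_def by arith+
  define c where "c = min a b"
  have cpos: "c > 0" using apos bpos by (simp add: c_def)
  define M where "M = 4 * Hm / c"
  define J where "J = {(k,i). i < n \<and> \<bar>psi (k,i)\<bar> < M}"
  have finJ: "finite J" unfolding J_def by (rule finite_psi_bounded)
  define U where "U = (\<Inter>j\<in>J. {y. lor y (uu (psi j)) < - h (snd j)}) \<inter> ball x (c/4)"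
  have openU: "open U"
  proof -
    have "open {y. lor y (uu (psi j)) < - h (snd j)}" for j
      by (rule open_Collect_less[OF cont_lor continuous_on_const])
    then show ?thesis unfolding U_def using finJ by (intro open_Int open_INT) auto
  qed
  have xU: "x \<in> U" unfolding U_def J_def using strict cpos by auto
  have "U \<subseteq> PP"
  proof
    fix y assume y: "y \<in> U"
    then have dy: "norm (y - x) < c/4" unfolding U_def by (simp add: dist_norm norm_minus_commute)
    have "\<bar>(y - x)$1\<bar> \<le> norm (y - x)" "\<bar>(y - x)$2\<bar> \<le> norm (y - x)"
      using component_le_norm_cart by (metis real_norm_def)+
    then have c1: "\<bar>y$1 - x$1\<bar> < c/4" "\<bar>y$2 - x$2\<bar> < c/4" using dy by auto
    have ca: "c \<le> a" and cb: "c \<le> b" unfolding c_def by auto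
    have ay: "y$2 - y$1 \<ge> c/2" using c1 ca unfolding a_def abs_less_iff by linarith
    have by': "y$2 + y$1 \<ge> c/2" using c1 cb unfolding b_def abs_less_iff by linarith
    show "y \<in> PP" unfolding PP_def
    proof clarify
      fix k i assume iN: "i < n"
      show "lor y (uu (psi (k,i))) \<le> - h i"
      proof (cases "(k,i) \<in> J")
        case True
        then show ?thesis using y unfolding U_def by fastforce
      next
        case False
        define p where "p = psi (k,i)"
        have pM: "\<bar>p\<bar> \<ge> M" using False iN unfolding J_def p_def by auto
        have "(c/2) * exp p \<le> (y$2 - y$1) * exp p" using ay by (simp add: mult_right_mono)
        moreover have "(c/2) * exp (-p) \<le> (y$2 + y$1) * exp (-p)" using by' by (simp add: mult_right_mono)
        moreover have "c * cosh p = (c/2) * exp p + (c/2) * exp (-p)"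
          by (simp add: cosh_def algebra_simps)
        ultimately have "c * cosh p \<le> (y$2 - y$1) * exp p + (y$2 + y$1) * exp (-p)"
          by linarith
        moreover have "c * cosh p > c * (\<bar>p\<bar> / 2)" using cpos cosh_gt_abs_half by simp
        moreover have "c * (\<bar>p\<bar> / 2) \<ge> c * (M/2)" using cpos pM by simp
        moreover have "c * (M/2) = 2 * Hm" unfolding M_def using cpos by simp
        moreover have "h i \<le> Hm" using iN by (rule Hm)
        ultimately have "(y$2 - y$1) * exp p + (y$2 + y$1) * exp (-p) > 2 * h i"
          by linarith
        then show ?thesis unfolding p_def[symmetric] lor_uu_exp by simp
      qed
    qed
  qed
  then show ?thesis using interiorI[OF openU xU] by blast
qed

definition L where "L = h 0 / cosh (\<bar>phi 0\<bar> + t)"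
definition K0 :: int where "K0 = \<lceil>(2 * Hm / L + t + Phi) / t\<rceil>"
definition J0 where "J0 = {-K0..K0} \<times> {..<n}"
definition G where "G a b th = h (snd a) * cosh (th - psi b) - h (snd b) * cosh (th - psi a)"

lemma h0: "h 0 > 0" using hpos npos by auto
lemma L_pos: "L > 0" using h0 by (simp add: L_def)

lemma F00_lb: "0 \<le> th \<Longrightarrow> th \<le> t \<Longrightarrow> L \<le> F (0,0) th"
proof -
  assume th: "0 \<le> th" "th \<le> t"
  have "\<bar>th - phi 0\<bar> \<le> \<bar>phi 0\<bar> + t" using th by arith
  then have "cosh \<bar>th - phi 0\<bar> \<le> cosh (\<bar>phi 0\<bar> + t)"
    using tpos by (subst cosh_real_nonneg_le_iff) auto
  then have c: "cosh (th - phi 0) \<le> cosh (\<bar>phi 0\<bar> + t)" by simp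
  show ?thesis unfolding L_def F_def psi_def using h0 c
    by (simp add: divide_left_mono)
qed

lemma finite_J0: "finite J0" unfolding J0_def by simp

lemma J00: "(0,0) \<in> J0"
proof -
  have "\<bar>phi 0\<bar> \<le> Phi" using Phi[of 0] npos by simp
  then have "Phi \<ge> 0" by (meson abs_ge_zero order_trans)
  moreover have "2 * Hm / L \<ge> 0" using Hm_pos L_pos by simp
  ultimately have "2 * Hm / L + t + Phi \<ge> 0" using tpos by linarith
  then have "(2 * Hm / L + t + Phi) / t \<ge> 0" using tpos by simp
  then have "K0 \<ge> 0" unfolding K0_def by linarith
  then show ?thesis unfolding J0_def using npos by auto
qed

lemma outside_J0:
  assumes th: "0 \<le> th" "th \<le> t" and i: "i < n" and nJ: "(k,i) \<notin> J0"
  shows "F (k,i) th < L"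
proof (rule ccontr)
  assume "\<not> F (k,i) th < L"
  then have "L \<le> h i / cosh (th - psi (k,i))" by (simp add: F_def)
  then have "L * cosh (th - psi (k,i)) \<le> h i" by (simp add: le_divide_eq)
  also have "\<dots> \<le> Hm" using i by (rule Hm)
  finally have "cosh (th - psi (k,i)) \<le> Hm / L" using L_pos by (simp add: le_divide_eq mult.commute)
  then have "\<bar>th - psi (k,i)\<bar> < 2 * Hm / L" using cosh_gt_abs_half[of "th - psi (k,i)"] by simp
  then have "\<bar>of_int k * t\<bar> < 2 * Hm / L + t + Phi"
    using th Phi[OF i] unfolding psi_def by simp
  then have "\<bar>of_int k\<bar> * t < 2 * Hm / L + t + Phi" using tpos by (simp add: abs_mult)
  then have "\<bar>of_int k\<bar> < (2 * Hm / L + t + Phi) / t" using tpos by (simp add: pos_less_divide_eq)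
  also have "\<dots> \<le> of_int K0" unfolding K0_def by (rule le_of_int_ceiling)
  finally have "of_int \<bar>k\<bar> < (of_int K0 :: real)" by simp
  then have "\<bar>k\<bar> < K0" by (simp only: of_int_less_iff)
  then show False using nJ i unfolding J0_def by auto
qed

lemma F_le_G: "F b th \<le> F a th \<longleftrightarrow> G a b th \<ge> 0"
proof -
  have ca: "cosh (th - psi a) > 0" and cb: "cosh (th - psi b) > 0" by simp_all
  have "F b th \<le> F a th \<longleftrightarrow> h (snd b) * cosh (th - psi a) \<le> h (snd a) * cosh (th - psi b)"
    unfolding F_def using ca cb by (simp add: divide_le_eq le_divide_eq mult.commute)
  then show ?thesis unfolding G_def by linarith
qed

lemma G_exp: "G a b th = (h (snd a) * exp (- psi b) / 2 - h (snd b) * exp (- psi a) / 2) * exp th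
   + (h (snd a) * exp (psi b) / 2 - h (snd b) * exp (psi a) / 2) * exp (- th)"
  unfolding G_def cosh_shift by (simp add: algebra_simps)

lemma G_cont: "isCont (G a b) x"
  unfolding G_def by (intro continuous_intros)

lemma G_zeros: "(\<forall>z. G a b z = 0) \<or> (\<forall>x\<in>{z. G a b z = 0}. \<forall>y\<in>{z. G a b z = 0}. x = y)"
proof (rule disjCI)
  assume "\<not> (\<forall>x\<in>{z. G a b z = 0}. \<forall>y\<in>{z. G a b z = 0}. x = y)"
  then obtain x y where "G a b x = 0" "G a b y = 0" "x \<noteq> y" by auto
  then have "(h (snd a) * exp (- psi b) / 2 - h (snd b) * exp (- psi a) / 2) = 0 \<and>
             (h (snd a) * exp (psi b) / 2 - h (snd b) * exp (psi a) / 2) = 0"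
    unfolding G_exp by (rule expg_two_zeros)
  then show "\<forall>z. G a b z = 0" unfolding G_exp by simp
qed

definition B0 where
  "B0 = insert 0 (\<Union>a\<in>J0. \<Union>b\<in>J0. {z. 0 < z \<and> z < t \<and> G a b z = 0 \<and> \<not> (\<forall>w. G a b w = 0)})"

lemma finite_B0: "finite B0"
proof -
  have fin: "finite {z. 0 < z \<and> z < t \<and> G a b z = 0 \<and> \<not> (\<forall>w. G a b w = 0)}" for a b
  proof (cases "\<forall>w. G a b w = 0")
    case True then show ?thesis by simp
  next
    case False
    then have "\<forall>x\<in>{z. G a b z = 0}. \<forall>y\<in>{z. G a b z = 0}. x = y" using G_zeros by blast
    then have "finite {z. G a b z = 0}" by (rule subsingleton_finite)
    then show ?thesis by (rule finite_subset[rotated]) auto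
  qed
  have "finite (\<Union>a\<in>J0. \<Union>b\<in>J0. {z. 0 < z \<and> z < t \<and> G a b z = 0 \<and> \<not> (\<forall>w. G a b w = 0)})"
    using finite_J0 fin by blast
  then show ?thesis unfolding B0_def by blast
qed

lemma B0_range: "z \<in> B0 \<Longrightarrow> 0 \<le> z \<and> z < t"
  unfolding B0_def using tpos by auto

definition xs where "xs = sorted_list_of_set B0"
definition N where "N = length xs"
definition nxt where "nxt l = (if Suc l < N then xs ! Suc l else t)"

lemma set_xs: "set xs = B0" unfolding xs_def using finite_B0 by simp
lemma sorted_xs: "sorted_wrt (<) xs" unfolding xs_def by (rule strict_sorted_list_of_set)

lemma xs_less: "i < j \<Longrightarrow> j < N \<Longrightarrow> xs ! i < xs ! j"
  unfolding N_def by (rule sorted_wrt_nth_less[OF sorted_xs])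

lemma xs_le: "i \<le> j \<Longrightarrow> j < N \<Longrightarrow> xs ! i \<le> xs ! j"
proof (cases "i = j")
  case True then show ?thesis by simp
next
  case False
  assume "i \<le> j" "j < N"
  with False have "i < j" by simp
  then show ?thesis using xs_less \<open>j < N\<close> by (simp add: less_imp_le)
qed

lemma xs_in: "l < N \<Longrightarrow> xs ! l \<in> B0" unfolding N_def using set_xs nth_mem by blast

lemma N_pos: "N > 0"
proof -
  have "0 \<in> set xs" using set_xs B0_def by auto
  then show ?thesis unfolding N_def by (cases xs) auto
qed

lemma xs0: "xs ! 0 = 0"
proof -
  have "0 \<in> set xs" using set_xs B0_def by auto
  then obtain j where j: "j < N" "xs ! j = 0" unfolding N_def by (metis in_set_conv_nth)
  have "xs ! 0 \<le> xs ! j" using j by (intro xs_le) auto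
  moreover have "xs ! 0 \<ge> 0" using B0_range xs_in N_pos by auto
  ultimately show ?thesis using j by simp
qed

lemma xs_range: "l < N \<Longrightarrow> 0 \<le> xs ! l \<and> xs ! l < t" using B0_range xs_in by blast

lemma xs_nxt: "l < N \<Longrightarrow> xs ! l < nxt l"
  unfolding nxt_def using xs_less xs_range by auto

lemma nxt_le: "l < N \<Longrightarrow> nxt l \<le> t"
  unfolding nxt_def using xs_range by (auto simp: less_imp_le)

lemma gap: "l < N \<Longrightarrow> xs ! l < z \<Longrightarrow> z < nxt l \<Longrightarrow> z \<notin> B0"
proof
  assume l: "l < N" and z: "xs ! l < z" "z < nxt l" and zB: "z \<in> B0"
  then obtain j where j: "j < N" "xs ! j = z" using set_xs unfolding N_def by (metis in_set_conv_nth)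
  show False
  proof (cases "j \<le> l")
    case True
    then show ?thesis using xs_le[OF True l] j z by simp
  next
    case False
    then have "Suc l \<le> j" by simp
    then have "Suc l < N" "xs ! Suc l \<le> z" using xs_le[of "Suc l" j] j by auto
    then show ?thesis using z(2) unfolding nxt_def by simp
  qed
qed

lemma base_dom:
  assumes l: "l < N"
  shows "\<exists>d. snd d < n \<and> (\<forall>th. xs ! l \<le> th \<and> th \<le> nxt l \<longrightarrow> (\<forall>k i. i < n \<longrightarrow> F (k,i) th \<le> F d th))"
proof -
  define p where "p = xs ! l"
  define q where "q = nxt l"
  define m where "m = (p + q) / 2"
  have pq: "p < q" "0 \<le> p" "q \<le> t" using xs_nxt[OF l] xs_range[OF l] nxt_le[OF l]
    unfolding p_def q_def by auto
  have pm: "p < m" "m < q" using pq unfolding m_def by auto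
  have ne: "(\<lambda>j. F j m) ` J0 \<noteq> {}" using J00 by auto
  define Mx where "Mx = Max ((\<lambda>j. F j m) ` J0)"
  have "Mx \<in> (\<lambda>j. F j m) ` J0" unfolding Mx_def using finite_J0 ne by (intro Max_in) auto
  then obtain d where d: "d \<in> J0" "F d m = Mx" by auto
  have dmax: "F b m \<le> F d m" if "b \<in> J0" for b
    using d finite_J0 that unfolding Mx_def by auto
  have dn: "snd d < n" using d(1) unfolding J0_def by auto
  have inJ: "F b th \<le> F d th" if b: "b \<in> J0" and th: "p \<le> th" "th \<le> q" for b th
  proof -
    have "G d b th \<ge> 0"
    proof (cases "\<forall>w. G d b w = 0")
      case True then show ?thesis by simp
    next
      case False
      show ?thesis
      proof (rule sign_const[OF G_cont pm _ _ th])
        show "G d b m \<ge> 0" using dmax[OF b] F_le_G by blast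
        fix z assume z: "p < z" "z < q"
        show "G d b z \<noteq> 0"
        proof
          assume "G d b z = 0"
          then have "z \<in> B0" unfolding B0_def using z pq False d(1) b by auto
          then show False using gap[OF l] z unfolding p_def q_def by blast
        qed
      qed
    qed
    then show ?thesis using F_le_G by blast
  qed
  show ?thesis
  proof (intro exI[of _ d] conjI dn allI impI)
    fix th k i assume th: "xs ! l \<le> th \<and> th \<le> nxt l" and i: "i < n"
    then have th': "p \<le> th" "th \<le> q" unfolding p_def q_def by auto
    show "F (k,i) th \<le> F d th"
    proof (cases "(k,i) \<in> J0")
      case True then show ?thesis using inJ th' by blast
    next
      case False
      have "F (k,i) th < L" using outside_J0[OF _ _ i False] th' pq by auto
      also have "L \<le> F (0,0) th" using F00_lb th' pq by auto
      also have "\<dots> \<le> F d th" using inJ[OF J00 th'] .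
      finally show ?thesis by simp
    qed
  qed
qed

definition ths :: "int \<Rightarrow> real" where
  "ths k = xs ! nat (k mod int N) + of_int (k div int N) * t"

lemma ths_step: "ths (k + 1) = nxt (nat (k mod int N)) + of_int (k div int N) * t"
proof -
  define l where "l = k mod int N"
  define q where "q = k div int N"
  have NN: "int N > 0" using N_pos by simp
  have l: "0 \<le> l" "l < int N" unfolding l_def using NN by auto
  note st = int_step[OF NN, of k, folded l_def q_def]
  show ?thesis
  proof (cases "l + 1 < int N")
    case True
    then have m: "(k + 1) mod int N = l + 1" and d: "(k + 1) div int N = q" using st by auto
    have "Suc (nat l) < N" using True l by linarith
    moreover have "nat (l + 1) = Suc (nat l)" using l by simp
    ultimately show ?thesis unfolding ths_def m d nxt_def l_def[symmetric] q_def[symmetric] by simp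
  next
    case False
    then have m: "(k + 1) mod int N = 0" and d: "(k + 1) div int N = q + 1" using st by auto
    have "\<not> Suc (nat l) < N" using False l by linarith
    then show ?thesis unfolding ths_def m d nxt_def l_def[symmetric] q_def[symmetric]
      by (simp add: xs0 algebra_simps)
  qed
qed

lemma ths_mod_range: "nat (k mod int N) < N"
  using N_pos by (simp add: nat_less_iff)

lemma ths_mono: "ths k < ths (k + 1)"
  unfolding ths_step using xs_nxt[OF ths_mod_range] by (simp add: ths_def)

lemma ths_cover: "\<exists>k. ths k \<le> th \<and> th \<le> ths (k + 1)"
proof -
  define q where "q = \<lfloor>th / t\<rfloor>"
  define th' where "th' = th - of_int q * t"
  have "of_int q \<le> th / t" "th / t < of_int q + 1" unfolding q_def by linarith+
  then have th': "0 \<le> th'" "th' < t" unfolding th'_def using tpos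
    by (simp_all add: field_simps)
  define S where "S = {l. l < N \<and> xs ! l \<le> th'}"
  have S0: "0 \<in> S" unfolding S_def using N_pos xs0 th' by simp
  have finS: "finite S" unfolding S_def by simp
  define l where "l = Max S"
  have lS: "l \<in> S" unfolding l_def using S0 finS by (intro Max_in) auto
  then have lN: "l < N" and lle: "xs ! l \<le> th'" unfolding S_def by auto
  have nxt_ge: "th' \<le> nxt l"
  proof (cases "Suc l < N")
    case True
    have "Suc l \<notin> S" using Max_ge[OF finS, of "Suc l"] unfolding l_def by auto
    then have "th' < xs ! Suc l" using True unfolding S_def by auto
    then show ?thesis using True unfolding nxt_def by simp
  next
    case False then show ?thesis using th' unfolding nxt_def by simp
  qed
  define k where "k = int l + q * int N"
  have NN: "int N > 0" using N_pos by simp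
  have m: "k mod int N = int l" unfolding k_def using lN by simp
  have d: "k div int N = q" unfolding k_def using lN NN by simp
  have "ths k = xs ! l + of_int q * t" unfolding ths_def m d by simp
  moreover have "ths (k + 1) = nxt l + of_int q * t" unfolding ths_step m d by simp
  ultimately show ?thesis using lle nxt_ge unfolding th'_def by (intro exI[of _ k]) auto
qed

lemma F_shift: "F (k + m, i) (th + of_int m * t) = F (k, i) th"
  unfolding F_def psi_def by (simp add: algebra_simps)

lemma global_dom: "\<exists>d. snd d < n \<and> (\<forall>th. ths k \<le> th \<and> th \<le> ths (k + 1) \<longrightarrow>
    (\<forall>k' i. i < n \<longrightarrow> F (k',i) th \<le> F d th))"
proof -
  define l where "l = nat (k mod int N)"
  define q where "q = k div int N"
  have lN: "l < N" unfolding l_def by (rule ths_mod_range)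
  obtain d0 where d0: "snd d0 < n"
    "\<And>th k i. xs ! l \<le> th \<Longrightarrow> th \<le> nxt l \<Longrightarrow> i < n \<Longrightarrow> F (k,i) th \<le> F d0 th"
    using base_dom[OF lN] by blast
  show ?thesis
  proof (intro exI[of _ "(fst d0 + q, snd d0)"] conjI allI impI)
    show "snd (fst d0 + q, snd d0) < n" using d0 by simp
    fix th k' i assume th: "ths k \<le> th \<and> th \<le> ths (k + 1)" and i: "i < n"
    define th' where "th' = th - of_int q * t"
    have a: "ths k = xs ! l + of_int q * t" unfolding ths_def l_def q_def ..
    have b: "ths (k + 1) = nxt l + of_int q * t" unfolding l_def q_def by (rule ths_step)
    have th': "xs ! l \<le> th'" "th' \<le> nxt l"
      using th unfolding a b th'_def by auto
    have "F (k', i) th = F (k' - q + q, i) (th' + of_int q * t)" unfolding th'_def by simp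
    also have "\<dots> = F (k' - q, i) th'" by (rule F_shift)
    also have "\<dots> \<le> F d0 th'" using d0(2)[OF th' i] .
    also have "\<dots> = F (fst d0 + q, snd d0) (th' + of_int q * t)"
      using F_shift[of "fst d0" q "snd d0" th'] by simp
    also have "\<dots> = F (fst d0 + q, snd d0) th" unfolding th'_def by simp
    finally show "F (k', i) th \<le> F (fst d0 + q, snd d0) th" .
  qed
qed

lemma frontier_main:
  "\<exists>v :: int \<Rightarrow> real^2. (\<forall>k. v k \<noteq> v (k + 1)) \<and> frontier PP = (\<Union>k. closed_segment (v k) (v (k + 1)))"
proof -
  have "\<forall>k. \<exists>d. snd d < n \<and> (\<forall>th. ths k \<le> th \<and> th \<le> ths (k + 1) \<longrightarrow>
    (\<forall>k' i. i < n \<longrightarrow> F (k',i) th \<le> F d th))" using global_dom by blast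
  from choice[OF this] obtain d where d0: "\<forall>k. snd (d k) < n \<and> (\<forall>th. ths k \<le> th \<and> th \<le> ths (k + 1) \<longrightarrow>
    (\<forall>k' i. i < n \<longrightarrow> F (k',i) th \<le> F (d k) th))" by (rule exE)
  have d: "\<And>k. snd (d k) < n"
    "\<And>k th k' i. ths k \<le> th \<Longrightarrow> th \<le> ths (k + 1) \<Longrightarrow> i < n \<Longrightarrow> F (k',i) th \<le> F (d k) th"
    using d0 by blast+
  have dom: "F j th \<le> F (d k) th" if "ths k \<le> th" "th \<le> ths (k + 1)" "snd j < n" for j th k
    using d(2)[OF that(1,2) that(3), of "fst j"] by simp
  define v where "v k = F (d k) (ths k) *\<^sub>R uu (ths k)" for k
  have Fpos: "F (d k) th > 0" for k th using F_pos d(1) by blast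
  have vnext: "v (k + 1) = F (d k) (ths (k + 1)) *\<^sub>R uu (ths (k + 1))" for k
  proof -
    have "F (d (k+1)) (ths (k + 1)) \<le> F (d k) (ths (k + 1))"
      using dom[of k "ths (k+1)" "d (k+1)"] ths_mono[of k] d(1) by simp
    moreover have "F (d k) (ths (k + 1)) \<le> F (d (k+1)) (ths (k + 1))"
      using dom[of "k+1" "ths (k+1)" "d k"] ths_mono[of "k+1"] d(1) by simp
    ultimately show ?thesis unfolding v_def by simp
  qed
  \<comment> \<open>points of the curve\<close>
  have pt_PP: "F (d k) th *\<^sub>R uu th \<in> PP" if "ths k \<le> th" "th \<le> ths (k + 1)" for k th
    unfolding in_PP_iff using dom[OF that] by auto
  have pt_line: "lor (F (d k) th *\<^sub>R uu th) (uu (psi (d k))) = - h (snd (d k))" for k th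
    using on_line_iff by blast
  have vk_PP: "v k \<in> PP" for k unfolding v_def using pt_PP ths_mono[of k] by (simp add: less_imp_le)
  have vk1_PP: "v (k+1) \<in> PP" for k unfolding vnext using pt_PP ths_mono[of k] by (simp add: less_imp_le)
  have vk_line: "lor (v k) (uu (psi (d k))) = - h (snd (d k))" for k unfolding v_def by (rule pt_line)
  have vk1_line: "lor (v (k+1)) (uu (psi (d k))) = - h (snd (d k))" for k unfolding vnext by (rule pt_line)
  show ?thesis
  proof (intro exI[of _ v] conjI allI)
    fix k show "v k \<noteq> v (k + 1)"
      unfolding v_def vnext
    proof (rule uu_ne[OF Fpos])
      show "ths k \<noteq> ths (k + 1)" using ths_mono[of k] by simp
    qed
  next
    show "frontier PP = (\<Union>k. closed_segment (v k) (v (k + 1)))"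
    proof
      show "(\<Union>k. closed_segment (v k) (v (k + 1))) \<subseteq> frontier PP"
      proof clarify
        fix k y assume y: "y \<in> closed_segment (v k) (v (k + 1))"
        have yP: "y \<in> PP" using y closed_segment_subset[OF vk_PP vk1_PP convex_PP] by blast
        obtain u where u: "y = (1 - u) *\<^sub>R v k + u *\<^sub>R v (k + 1)" using y by (auto simp: in_segment)
        have "lor y (uu (psi (d k))) = (1 - u) * lor (v k) (uu (psi (d k))) + u * lor (v (k+1)) (uu (psi (d k)))"
          unfolding u by (rule lor_lin)
        also have "\<dots> = - h (snd (d k))" unfolding vk_line vk1_line by (simp add: algebra_simps)
        finally have "lor y (uu (psi (fst (d k), snd (d k)))) = - h (snd (d k))" by simp
        then show "y \<in> frontier PP" using frontier_I[OF yP _ d(1)] by blast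
      qed
    next
      show "frontier PP \<subseteq> (\<Union>k. closed_segment (v k) (v (k + 1)))"
      proof
        fix x assume xf: "x \<in> frontier PP"
        have xP: "x \<in> PP" using xf closed_PP frontier_subset_closed by blast
        have xni: "x \<notin> interior PP" using xf by (simp add: frontier_def)
        obtain r th where r: "r > 0" and x: "x = r *\<^sub>R uu th" using polar[OF subsetD[OF PP_sub xP]] by blast
        obtain k0 i0 where ki: "i0 < n" "\<not> lor x (uu (psi (k0,i0))) < - h i0"
          using interior_I[OF xP] xni by blast
        have "lor x (uu (psi (k0,i0))) \<le> - h i0" using xP ki(1) unfolding PP_def by blast
        then have "lor x (uu (psi (k0,i0))) = - h i0" using ki by linarith
        then have Fr: "F (k0,i0) th = r" using on_line_iff[of r th "(k0,i0)"] unfolding x by simp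
        obtain k where k: "ths k \<le> th" "th \<le> ths (k + 1)" using ths_cover by blast
        have all: "\<forall>k i. i < n \<longrightarrow> F (k,i) th \<le> r" using xP unfolding x in_PP_iff .
        have "F (k0,i0) th \<le> F (d k) th" using dom[OF k] ki by simp
        moreover have "F (fst (d k), snd (d k)) th \<le> r" using all d(1)[of k] by blast
        then have "F (d k) th \<le> r" by simp
        ultimately have rd: "r = F (d k) th" using Fr by simp
        define a where "a = ths k"
        define b where "b = ths (k+1)"
        have ab: "a < b" unfolding a_def b_def by (rule ths_mono)
        have ath: "a \<le> th" "th \<le> b" using k unfolding a_def b_def by auto
        define ra where "ra = F (d k) a"
        define rb where "rb = F (d k) b"
        have rapos: "ra > 0" and rbpos: "rb > 0" unfolding ra_def rb_def using Fpos by auto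
        define al where "al = sinh (b - th) / sinh (b - a)"
        define be where "be = sinh (th - a) / sinh (b - a)"
        have al: "al \<ge> 0" and be: "be \<ge> 0" unfolding al_def be_def using ab ath by simp_all
        have uth: "uu th = al *\<^sub>R uu a + be *\<^sub>R uu b" unfolding al_def be_def by (rule cone_uu[OF ab])
        have va: "v k = ra *\<^sub>R uu a" unfolding v_def ra_def a_def ..
        have vb: "v (k+1) = rb *\<^sub>R uu b" unfolding vnext rb_def b_def ..
        define c1 where "c1 = r * al / ra"
        define c2 where "c2 = r * be / rb"
        have xc: "x = c1 *\<^sub>R v k + c2 *\<^sub>R v (k + 1)"
          unfolding x uth va vb c1_def c2_def using rapos rbpos by (simp add: scaleR_add_right)
        have c1: "c1 \<ge> 0" and c2: "c2 \<ge> 0" unfolding c1_def c2_def using r al be rapos rbpos by simp_all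
        have hpos': "h (snd (d k)) > 0" using hpos d(1) by blast
        have "lor x (uu (psi (d k))) = - h (snd (d k))" unfolding x rd by (rule pt_line)
        moreover have "lor x (uu (psi (d k))) = c1 * lor (v k) (uu (psi (d k))) + c2 * lor (v (k+1)) (uu (psi (d k)))"
          unfolding xc by (rule lor_lin)
        ultimately have "- h (snd (d k)) = (c1 + c2) * (- h (snd (d k)))"
          unfolding vk_line vk1_line by (simp add: algebra_simps)
        then have "c1 + c2 = 1" using hpos' by simp
        then have "x = (1 - c2) *\<^sub>R v k + c2 *\<^sub>R v (k + 1)" "0 \<le> c2" "c2 \<le> 1"
          using xc c1 c2 by auto
        then have "x \<in> closed_segment (v k) (v (k + 1))" by (auto simp: in_segment)
        then show "x \<in> (\<Union>k. closed_segment (v k) (v (k + 1)))" by blast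
      qed
    qed
  qed
qed

end

theorem lemma3p3:
  fixes t :: real and P :: "(real^2) set"
  assumes "t > 0" and "t_convex_polygon t P"
  shows "convex P \<and> P \<noteq> {} \<and> P \<noteq> UNIV \<and> P \<subseteq> future_cone
       \<and> (\<exists>v :: int \<Rightarrow> real^2. (\<forall>k. v k \<noteq> v (k + 1))
             \<and> frontier P = (\<Union>k. closed_segment (v k) (v (k + 1))))
       \<and> (\<forall>k::int. Hpow t k ` P = P)"
proof -
  obtain n :: nat and \<eta> :: "nat \<Rightarrow> real^2" and h :: "nat \<Rightarrow> real" where
    o: "n \<ge> 1" "\<forall>i<n. \<eta> i \<in> hyperbola" "\<forall>i<n. h i > 0"
      "P = (\<Inter>k::int. \<Inter>i\<in>{..<n}. halfplane t k (h i) (\<eta> i))"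
    using assms(2) unfolding t_convex_polygon_def by blast
  interpret tp t n \<eta> h using assms(1) o by unfold_locales auto
  have P: "P = PP" using o(4) P_eq by simp
  have ne: "PP \<noteq> {}" using PP_nonempty by blast
  have nu: "PP \<noteq> UNIV" using zero_notin by blast
  show ?thesis unfolding P
    using convex_PP ne nu PP_sub frontier_main Hpow_PP by (intro conjI) auto
qed

end
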